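(* Let $\mathcal{F}$ be a set of connected graphs with $P_{2}\in\mathcal{F}$, and let $G$ be a finite simple graph. If $b_{\mathcal{F}}(G-X)\leq |X|$ for all $X\subseteq V(G)$, then $G$ has an $\mathcal{F}$-factor.
   Context: A graph $H$ is hypomatchable if $H-u$ has a perfect matching for every $u\in V(H)$ (in particular $K_1$ is hypomatchable). For a set $\mathcal{F}$ of connected graphs, an $\mathcal{F}$-factor of a graph is a spanning subgraph each of whose components is isomorphic to a member of $\mathcal{F}$. For a graph $H$, $b_{\mathcal{F}}(H)$ denotes the number of connected components of $H$ that are hypomatchable and have no $\mathcal{F}$-factor. $P_2$ is the path on two vertices. *)

theory Defs
  imports Main
begin

type_synonym 'a graph = "'a set \<times> 'a set set"

definition verts :: "'a graph \<Rightarrow> 'a set" where "verts G = fst G"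
definition edges :: "'a graph \<Rightarrow> 'a set set" where "edges G = snd G"

definition simple_graph :: "'a graph \<Rightarrow> bool" where
  "simple_graph G \<longleftrightarrow>
     (\<forall>e\<in>edges G. \<exists>u v. e = {u, v} \<and> u \<noteq> v \<and> u \<in> verts G \<and> v \<in> verts G)"

definition finite_simple_graph :: "'a graph \<Rightarrow> bool" where
  "finite_simple_graph G \<longleftrightarrow> simple_graph G \<and> finite (verts G)"

definition reach :: "'a graph \<Rightarrow> 'a \<Rightarrow> 'a \<Rightarrow> bool" where
  "reach G = (\<lambda>x y. {x, y} \<in> edges G)\<^sup>*\<^sup>*"

definition connected_graph :: "'a graph \<Rightarrow> bool" where
  "connected_graph G \<longleftrightarrow> verts G \<noteq> {} \<and> (\<forall>u\<in>verts G. \<forall>v\<in>verts G. reach G u v)"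

definition induced :: "'a graph \<Rightarrow> 'a set \<Rightarrow> 'a graph" where
  "induced G S = (verts G \<inter> S, {e \<in> edges G. e \<subseteq> S})"

definition del_verts :: "'a graph \<Rightarrow> 'a set \<Rightarrow> 'a graph" where
  "del_verts G X = induced G (verts G - X)"

definition components :: "'a graph \<Rightarrow> 'a set set" where
  "components G = {{v \<in> verts G. reach G u v} | u. u \<in> verts G}"

definition component_graphs :: "'a graph \<Rightarrow> 'a graph set" where
  "component_graphs G = induced G ` components G"

definition isomorphic :: "'a graph \<Rightarrow> 'b graph \<Rightarrow> bool" where
  "isomorphic G H \<longleftrightarrow> (\<exists>f. bij_betw f (verts G) (verts H) \<and>
      (\<forall>u\<in>verts G. \<forall>v\<in>verts G. {u, v} \<in> edges G \<longleftrightarrow> {f u, f v} \<in> edges H))"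

definition perfect_matching :: "'a graph \<Rightarrow> 'a set set \<Rightarrow> bool" where
  "perfect_matching G M \<longleftrightarrow> M \<subseteq> edges G \<and>
     (\<forall>v\<in>verts G. \<exists>!e. e \<in> M \<and> v \<in> e)"

definition has_perfect_matching :: "'a graph \<Rightarrow> bool" where
  "has_perfect_matching G \<longleftrightarrow> (\<exists>M. perfect_matching G M)"

definition hypomatchable :: "'a graph \<Rightarrow> bool" where
  "hypomatchable H \<longleftrightarrow> (\<forall>u\<in>verts H. has_perfect_matching (del_verts H {u}))"

definition is_factor :: "'b graph set \<Rightarrow> 'a graph \<Rightarrow> 'a set set \<Rightarrow> bool" where
  "is_factor F G E' \<longleftrightarrow> E' \<subseteq> edges G \<and>
     (\<forall>C\<in>component_graphs (verts G, E'). \<exists>H\<in>F. isomorphic C H)"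

definition has_factor :: "'b graph set \<Rightarrow> 'a graph \<Rightarrow> bool" where
  "has_factor F G \<longleftrightarrow> (\<exists>E'. is_factor F G E')"

definition b_F :: "'b graph set \<Rightarrow> 'a graph \<Rightarrow> nat" where
  "b_F F H = card {C \<in> component_graphs H. hypomatchable C \<and> \<not> has_factor F C}"

definition P2 :: "nat graph" where
  "P2 = ({0, 1}, {{0, 1}})"

end

theory Submission
  imports Defs
begin

lemma hall_aux:
  "finite I \<Longrightarrow> (\<forall>i\<in>I. finite (A i)) \<Longrightarrow> (\<forall>J\<subseteq>I. card J \<le> card (\<Union>(A ` J)))
   \<Longrightarrow> \<exists>f. inj_on f I \<and> (\<forall>i\<in>I. f i \<in> A i)"
proof (induction "card I" arbitrary: I A rule: less_induct)
  case less
  show ?case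
  proof (cases "I = {}")
    case True then show ?thesis by auto
  next
    case False
    show ?thesis
    proof (cases "\<exists>J. J \<subseteq> I \<and> J \<noteq> {} \<and> J \<noteq> I \<and> card J = card (\<Union>(A ` J))")
      case True
      then obtain J where J: "J \<subseteq> I" "J \<noteq> {}" "J \<noteq> I" "card J = card (\<Union>(A ` J))" by blast
      have fJ: "finite J" using J(1) less.prems(1) finite_subset by blast
      have cJ: "card J < card I" using J less.prems(1) by (meson psubsetI psubset_card_mono)
      have "\<exists>f. inj_on f J \<and> (\<forall>i\<in>J. f i \<in> A i)"
        using less.hyps[OF cJ fJ, of A] less.prems J(1) by auto
      then obtain f1 where f1: "inj_on f1 J" "\<forall>i\<in>J. f1 i \<in> A i" by blast
      define U where "U = \<Union>(A ` J)"
      have fU: "finite U" unfolding U_def using fJ J(1) less.prems(2) by auto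
      define A2 where "A2 = (\<lambda>i. A i - U)"
      have cI2: "card (I - J) < card I" using J less.prems(1)
        proof -
        have "card J > 0" using J(2) fJ by (simp add: card_gt_0_iff)
        then show ?thesis using card_Diff_subset[OF fJ J(1)] cJ by linarith
      qed
      have hall2: "\<forall>K\<subseteq>I - J. card K \<le> card (\<Union>(A2 ` K))"
      proof (intro allI impI)
        fix K assume K: "K \<subseteq> I - J"
        have fK: "finite K" using K less.prems(1) finite_subset by blast
        have eq: "\<Union>(A ` (K \<union> J)) = \<Union>(A2 ` K) \<union> U" unfolding A2_def U_def by auto
        have fA2: "finite (\<Union>(A2 ` K))" using fK less.prems(2) K unfolding A2_def by auto
        have KJ: "K \<union> J \<subseteq> I" using K J(1) by auto
        have "card (K \<union> J) \<le> card (\<Union>(A ` (K \<union> J)))" by (rule less.prems(3)[rule_format, OF KJ])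
        also have "\<dots> = card (\<Union>(A2 ` K)) + card U"
          unfolding eq by (rule card_Un_disjoint[OF fA2 fU]) (auto simp: A2_def)
        finally have "card (K \<union> J) \<le> card (\<Union>(A2 ` K)) + card U" .
        moreover have "card (K \<union> J) = card K + card J"
          using K fK fJ by (intro card_Un_disjoint) auto
        ultimately show "card K \<le> card (\<Union>(A2 ` K))" using J(4) U_def by simp
      qed
      have "\<exists>f. inj_on f (I - J) \<and> (\<forall>i\<in>I - J. f i \<in> A2 i)"
        using less.hyps[OF cI2, of A2] less.prems(1,2) hall2 unfolding A2_def by auto
      then obtain f2 where f2: "inj_on f2 (I - J)" "\<forall>i\<in>I - J. f2 i \<in> A2 i" by blast
      define f where "f = (\<lambda>i. if i \<in> J then f1 i else f2 i)"
      have "\<forall>i\<in>I. f i \<in> A i" using f1 f2 unfolding f_def A2_def by auto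
      moreover have "inj_on f I"
      proof (rule inj_onI)
        fix x y assume xy: "x \<in> I" "y \<in> I" "f x = f y"
        show "x = y"
        proof (cases "x \<in> J"; cases "y \<in> J")
          assume "x \<in> J" "y \<in> J" then show ?thesis using xy f1 unfolding f_def by (auto dest: inj_onD)
        next
          assume "x \<notin> J" "y \<notin> J" then show ?thesis using xy f2 unfolding f_def by (auto dest: inj_onD)
        next
          assume a: "x \<in> J" "y \<notin> J"
          then have "f x \<in> U" using f1 unfolding f_def U_def by auto
          moreover have "f y \<notin> U" using a f2 xy(1,2) unfolding f_def A2_def by auto
          ultimately show ?thesis using xy by auto
        next
          assume a: "x \<notin> J" "y \<in> J"
          then have "f y \<in> U" using f1 unfolding f_def U_def by auto
          moreover have "f x \<notin> U" using a f2 xy(1,2) unfolding f_def A2_def by auto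
          ultimately show ?thesis using xy by auto
        qed
      qed
      ultimately show ?thesis by blast
    next
      case False2: False
      obtain i0 where i0: "i0 \<in> I" using False by blast
      have "card {i0} \<le> card (A i0)" using less.prems(3)[rule_format, of "{i0}"] i0 by simp
      then obtain x where x: "x \<in> A i0" by fastforce
      define A2 where "A2 = (\<lambda>i. A i - {x})"
      have cI2: "card (I - {i0}) < card I" using i0 less.prems(1) by (metis card_Diff1_less)
      have hall2: "\<forall>K\<subseteq>I - {i0}. card K \<le> card (\<Union>(A2 ` K))"
      proof (intro allI impI)
        fix K assume K: "K \<subseteq> I - {i0}"
        show "card K \<le> card (\<Union>(A2 ` K))"
        proof (cases "K = {}")
          case True then show ?thesis by simp
        next
          case Kne: False
          have fK: "finite K" using K less.prems(1) finite_subset by blast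
          have fU: "finite (\<Union>(A ` K))" using fK K less.prems(2) by auto
          have "K \<noteq> I" using K i0 by auto
          moreover have "card K \<le> card (\<Union>(A ` K))" using less.prems(3) K by auto
          moreover have "K \<subseteq> I" using K by auto
          ultimately have "card K < card (\<Union>(A ` K))" using False2 Kne
            by (meson le_neq_implies_less)
          moreover have "\<Union>(A2 ` K) = \<Union>(A ` K) - {x}" unfolding A2_def by auto
          moreover have "card (\<Union>(A ` K) - {x}) \<ge> card (\<Union>(A ` K)) - 1"
            using fU by (simp add: diff_le_mono card_Diff_singleton_if)
          ultimately have "card K < card (\<Union>(A ` K))" "card (\<Union>(A ` K)) - 1 \<le> card (\<Union>(A2 ` K))" by simp_all
          then show ?thesis by arith
        qed
      qed
      have "\<exists>f. inj_on f (I - {i0}) \<and> (\<forall>i\<in>I - {i0}. f i \<in> A2 i)"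
        using less.hyps[OF cI2, of A2] less.prems(1,2) hall2 unfolding A2_def by auto
      then obtain f2 where f2: "inj_on f2 (I - {i0})" "\<forall>i\<in>I - {i0}. f2 i \<in> A2 i" by blast
      define f where "f = (\<lambda>i. if i = i0 then x else f2 i)"
      have "\<forall>i\<in>I. f i \<in> A i" using f2 x unfolding f_def A2_def by auto
      moreover have "inj_on f I"
        proof (rule inj_onI)
        fix a b assume ab: "a \<in> I" "b \<in> I" "f a = f b"
        show "a = b"
        proof (cases "a = i0"; cases "b = i0")
          assume "a \<noteq> i0" "b \<noteq> i0" then show ?thesis using ab f2 unfolding f_def by (auto dest: inj_onD)
        next
          assume "a = i0" "b \<noteq> i0" then show ?thesis using ab f2 unfolding f_def A2_def by auto
        next
          assume "a \<noteq> i0" "b = i0" then show ?thesis using ab f2 unfolding f_def A2_def by auto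
        qed simp
      qed
      ultimately show ?thesis by blast
    qed
  qed
qed

definition cg :: "'a graph \<Rightarrow> 'a set \<Rightarrow> 'a graph" where
  "cg G S = (S, {e \<in> edges G. e \<subseteq> S})"

lemma verts_cg[simp]: "verts (cg G S) = S" and edges_cg[simp]: "edges (cg G S) = {e \<in> edges G. e \<subseteq> S}"
  by (simp_all add: cg_def verts_def edges_def)

lemma cg_cg: "T \<subseteq> S \<Longrightarrow> cg (cg G S) T = cg G T"
  by (auto simp: cg_def edges_def)

lemma induced_cg: "T \<subseteq> S \<Longrightarrow> induced (cg G S) T = cg G T"
  by (auto simp: cg_def induced_def edges_def verts_def)

lemma del_verts_cg: "del_verts G X = cg G (verts G - X)"
  by (auto simp: cg_def induced_def del_verts_def)

lemma cg_inj: "cg G A = cg G B \<Longrightarrow> A = B"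
  by (simp add: cg_def)

lemma simple_cg_self: "simple_graph G \<Longrightarrow> cg G (verts G) = G"
  unfolding simple_graph_def cg_def by (cases G) (auto simp: verts_def edges_def)

lemma reach_sym: "reach G x y \<Longrightarrow> reach G y x"
  unfolding reach_def
proof (induction rule: rtranclp_induct)
  case base then show ?case by simp
next
  case (step y z)
  have "{z, y} \<in> edges G" using step(2) by (simp add: insert_commute)
  then show ?case using step(3) by (meson converse_rtranclp_into_rtranclp)
qed

lemma reach_trans: "reach G x y \<Longrightarrow> reach G y z \<Longrightarrow> reach G x z"
  unfolding reach_def by simp

lemma reach_mono: "reach G1 x y \<Longrightarrow> edges G1 \<subseteq> edges G2 \<Longrightarrow> reach G2 x y"
  unfolding reach_def
proof (induction rule: rtranclp_induct)
  case base then show ?case by simp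
next
  case (step y z) then show ?case by (meson rtranclp.rtrancl_into_rtrancl subsetD)
qed

definition comps :: "'a graph \<Rightarrow> 'a set \<Rightarrow> 'a set set" where
  "comps G S = components (cg G S)"

lemma comps_def2: "comps G S = {{v \<in> S. reach (cg G S) u v} | u. u \<in> S}"
  by (simp add: comps_def components_def)

definition closed :: "'a graph \<Rightarrow> 'a set \<Rightarrow> 'a set \<Rightarrow> bool" where
  "closed G S C \<longleftrightarrow> (\<forall>x\<in>C. \<forall>y\<in>S. {x, y} \<in> edges G \<longrightarrow> y \<in> C)"

definition conn :: "'a graph \<Rightarrow> 'a set \<Rightarrow> bool" where
  "conn G C \<longleftrightarrow> (\<forall>u\<in>C. \<forall>v\<in>C. reach (cg G C) u v)"

lemma reach_closed: "reach (cg G S) u v \<Longrightarrow> u \<in> C \<Longrightarrow> closed G S C \<Longrightarrow> v \<in> C"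
  unfolding reach_def
proof (induction rule: rtranclp_induct)
  case base then show ?case by simp
next
  case (step y z) then show ?case unfolding closed_def by auto
qed

lemma reach_restrict:
  assumes "reach (cg G S) u v" "u \<in> S"
  shows "reach (cg G {w \<in> S. reach (cg G S) u w}) u v"
proof -
  define C where "C = {w \<in> S. reach (cg G S) u w}"
  have "reach (cg G C) u v" using assms(1) unfolding reach_def
  proof (induction rule: rtranclp_induct)
    case base then show ?case by simp
  next
    case (step y z)
    have yz: "y \<in> S" "z \<in> S" using step(2) by auto
    have ry: "reach (cg G S) u y" using step(1) unfolding reach_def .
    have "reach (cg G S) u z" using step(1,2) unfolding reach_def by (meson rtranclp.rtrancl_into_rtrancl)
    then have "{y, z} \<in> edges (cg G C)"
      using step(2) yz ry unfolding C_def by auto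
    then show ?case using step(3) by (meson rtranclp.rtrancl_into_rtrancl)
  qed
  then show ?thesis unfolding C_def .
qed

lemma class_eq:
  assumes "C \<subseteq> S" "closed G S C" "conn G C" "u \<in> C"
  shows "C = {v \<in> S. reach (cg G S) u v}"
proof
  show "C \<subseteq> {v \<in> S. reach (cg G S) u v}"
  proof
    fix v assume "v \<in> C"
    then have "reach (cg G C) u v" using assms(3,4) unfolding conn_def by auto
    then have "reach (cg G S) u v" by (rule reach_mono) (use assms(1) in auto)
    then show "v \<in> {v \<in> S. reach (cg G S) u v}" using \<open>v \<in> C\<close> assms(1) by auto
  qed
next
  show "{v \<in> S. reach (cg G S) u v} \<subseteq> C"
  proof
    fix v assume "v \<in> {v \<in> S. reach (cg G S) u v}"
    then have "reach (cg G S) u v" by simp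
    then show "v \<in> C" using reach_closed[of G S u v C] assms(2,4) by blast
  qed
qed

lemma comps_iff:
  "C \<in> comps G S \<longleftrightarrow> C \<noteq> {} \<and> C \<subseteq> S \<and> closed G S C \<and> conn G C"
proof
  assume "C \<in> comps G S"
  then obtain u where u: "u \<in> S" "C = {v \<in> S. reach (cg G S) u v}" unfolding comps_def2 by blast
  have memC: "v \<in> C \<longleftrightarrow> v \<in> S \<and> reach (cg G S) u v" for v using u(2) by blast
  have uC: "u \<in> C" using u(1) memC unfolding reach_def by blast
  have CS: "C \<subseteq> S" using memC by blast
  have cl: "closed G S C"
    unfolding closed_def
  proof (intro ballI impI)
    fix x y assume xy: "x \<in> C" "y \<in> S" "{x, y} \<in> edges G"
    have rx: "reach (cg G S) u x" using xy(1) memC by blast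
    have "{x, y} \<in> edges (cg G S)" using xy CS by auto
    then have "reach (cg G S) u y" using rx unfolding reach_def by (meson rtranclp.rtrancl_into_rtrancl)
    then show "y \<in> C" using memC xy(2) by blast
  qed
  have cn: "conn G C"
    unfolding conn_def
  proof (intro ballI)
    fix x y assume xy: "x \<in> C" "y \<in> C"
    have "reach (cg G S) u x" "reach (cg G S) u y" using xy memC by blast+
    then have "reach (cg G {w \<in> S. reach (cg G S) u w}) u x" "reach (cg G {w \<in> S. reach (cg G S) u w}) u y"
      using reach_restrict[of G S u] u(1) by blast+
    then have "reach (cg G C) u x" "reach (cg G C) u y" using u(2) by simp_all
    then show "reach (cg G C) x y" using reach_sym[of "cg G C" u x] reach_trans[of "cg G C" x u y] by blast
  qed
  show "C \<noteq> {} \<and> C \<subseteq> S \<and> closed G S C \<and> conn G C" using uC CS cl cn by blast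
next
  assume a: "C \<noteq> {} \<and> C \<subseteq> S \<and> closed G S C \<and> conn G C"
  then obtain u where "u \<in> C" by auto
  then have "C = {v \<in> S. reach (cg G S) u v}" using class_eq[of C S G u] a by blast
  then show "C \<in> comps G S" unfolding comps_def2 using \<open>u \<in> C\<close> a by blast
qed

lemma comp_class: "C \<in> comps G S \<Longrightarrow> u \<in> C \<Longrightarrow> C = {v \<in> S. reach (cg G S) u v}"
  using class_eq[of C S G u] comps_iff[of C G S] by blast

lemma comps_disj: "C1 \<in> comps G S \<Longrightarrow> C2 \<in> comps G S \<Longrightarrow> x \<in> C1 \<Longrightarrow> x \<in> C2 \<Longrightarrow> C1 = C2"
proof -
  assume a: "C1 \<in> comps G S" "C2 \<in> comps G S" "x \<in> C1" "x \<in> C2"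
  have "C1 = {v \<in> S. reach (cg G S) x v}" by (rule comp_class[OF a(1,3)])
  moreover have "C2 = {v \<in> S. reach (cg G S) x v}" by (rule comp_class[OF a(2,4)])
  ultimately show ?thesis by simp
qed

lemma comps_sub: "C \<in> comps G S \<Longrightarrow> C \<subseteq> S"
  using comps_iff[of C G S] by blast

lemma comps_ne: "C \<in> comps G S \<Longrightarrow> C \<noteq> {}"
  using comps_iff[of C G S] by blast

lemma comps_cover: "x \<in> S \<Longrightarrow> \<exists>C\<in>comps G S. x \<in> C"
proof -
  assume x: "x \<in> S"
  have "{v\<in>S. reach (cg G S) x v} \<in> comps G S" unfolding comps_def2 mem_Collect_eq
    by (rule exI[of _ x]) (simp add: x)
  have r: "reach (cg G S) x x" unfolding reach_def by (rule rtranclp.rtrancl_refl)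
  then have "x \<in> {v\<in>S. reach (cg G S) x v}" using x by simp
  then show ?thesis using \<open>{v\<in>S. reach (cg G S) x v} \<in> comps G S\<close> by (rule bexI)
qed

lemma comps_Union: "\<Union>(comps G S) = S"
proof
  show "\<Union>(comps G S) \<subseteq> S"
  proof
    fix x assume "x \<in> \<Union>(comps G S)"
    then obtain C where "C \<in> comps G S" "x \<in> C" by blast
    then show "x \<in> S" using comps_sub[of C G S] by blast
  qed
  show "S \<subseteq> \<Union>(comps G S)"
  proof
    fix x assume "x \<in> S"
    then obtain C where "C \<in> comps G S" "x \<in> C" using comps_cover[of x S G] by blast
    then show "x \<in> \<Union>(comps G S)" by blast
  qed
qed

lemma comps_finite: "finite S \<Longrightarrow> finite (comps G S)"
proof -
  assume f: "finite S"
  have "comps G S \<subseteq> Pow S" using comps_sub[of _ G S] by blast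
  then show ?thesis using f finite_subset by blast
qed

lemma comps_remain_up:
  assumes "C \<in> comps G S" "S \<subseteq> S'" "\<forall>x\<in>C. \<forall>y\<in>S' - S. {x, y} \<notin> edges G"
  shows "C \<in> comps G S'"
proof -
  have c: "C \<noteq> {}" "C \<subseteq> S" "closed G S C" "conn G C" using assms(1) comps_iff[of C G S] by blast+
  have "closed G S' C" unfolding closed_def
  proof (intro ballI impI)
    fix x y assume xy: "x \<in> C" "y \<in> S'" "{x, y} \<in> edges G"
    then have "y \<in> S" using assms(3) by blast
    then show "y \<in> C" using c(3) xy unfolding closed_def by blast
  qed
  then show ?thesis using c assms(2) comps_iff[of C G S'] by blast
qed

lemma comps_remain_down:
  assumes "C \<in> comps G S" "C \<subseteq> S'" "S' \<subseteq> S"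
  shows "C \<in> comps G S'"
proof -
  have c: "C \<noteq> {}" "C \<subseteq> S" "closed G S C" "conn G C" using assms(1) comps_iff[of C G S] by blast+
  have "closed G S' C" using c(3) assms(3) unfolding closed_def by blast
  then show ?thesis using c assms(2) comps_iff[of C G S'] by blast
qed

lemma comps_sub_comp:
  assumes "L \<in> comps G S" "C \<in> comps G (L - Z)"
  shows "C \<in> comps G (S - Z)"
proof -
  have l: "L \<subseteq> S" "closed G S L" using assms(1) comps_iff[of L G S] by blast+
  have c: "C \<noteq> {}" "C \<subseteq> L - Z" "closed G (L - Z) C" "conn G C" using assms(2) comps_iff[of C G "L - Z"] by blast+
  have "closed G (S - Z) C" unfolding closed_def
  proof (intro ballI impI)
    fix x y assume xy: "x \<in> C" "y \<in> S - Z" "{x, y} \<in> edges G"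
    then have "y \<in> L" using l(2) c(2) unfolding closed_def by blast
    then show "y \<in> C" using c(3) xy unfolding closed_def by blast
  qed
  then show ?thesis using c l comps_iff[of C G "S - Z"] by blast
qed

definition cnt :: "'a graph \<Rightarrow> ('a set \<Rightarrow> bool) \<Rightarrow> 'a set \<Rightarrow> nat" where
  "cnt G P S = card {C \<in> comps G S. P C}"

lemma cnt_split:
  assumes fin: "finite S" and L: "L \<in> comps G S" and Z: "Z \<subseteq> L"
  shows "cnt G P S + cnt G P (L - Z) \<le> cnt G P (S - Z) + (if P L then 1 else 0)"
proof -
  define A1 where "A1 = {C \<in> comps G S. P C} - {L}"
  define A2 where "A2 = {C \<in> comps G (L - Z). P C}"
  have LS: "L \<subseteq> S" using L comps_sub[of L G S] by blast
  have f0: "finite (comps G (S - Z))" using fin by (simp add: comps_finite)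
  have sub1: "A1 \<subseteq> {C \<in> comps G (S - Z). P C}"
  proof
    fix C assume C: "C \<in> A1"
    then have C': "C \<in> comps G S" "C \<noteq> L" "P C" unfolding A1_def by auto
    have "C \<inter> L = {}" using C' L comps_disj[of C G S L] by blast
    then have "C \<subseteq> S - Z" using C' Z comps_sub[of C G S] by blast
    then show "C \<in> {C \<in> comps G (S - Z). P C}" using comps_remain_down[OF C'(1)] C' by auto
  qed
  have sub2: "A2 \<subseteq> {C \<in> comps G (S - Z). P C}"
    using comps_sub_comp[OF L] unfolding A2_def by auto
  have disj: "A1 \<inter> A2 = {}"
  proof (rule ccontr)
    assume "A1 \<inter> A2 \<noteq> {}"
    then obtain C where C: "C \<in> A1" "C \<in> A2" by blast
    then have "C \<in> comps G (L - Z)" unfolding A2_def by blast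
    then have "C \<subseteq> L - Z" "C \<noteq> {}" using comps_sub[of C G "L - Z"] comps_ne[of C G "L - Z"] by blast+
    then obtain x where "x \<in> C" "x \<in> L" by blast
    then have "C = L" using C L comps_disj[of C G S L] unfolding A1_def by blast
    then show False using C unfolding A1_def by auto
  qed
  have fA1: "finite A1" "finite A2"
    using sub1 sub2 f0 by (auto intro: finite_subset)
  have "card A1 + card A2 = card (A1 \<union> A2)" using fA1 disj by (simp add: card_Un_disjoint)
  also have "\<dots> \<le> cnt G P (S - Z)" unfolding cnt_def using sub1 sub2 f0 by (intro card_mono) auto
  finally have 1: "card A1 + card A2 \<le> cnt G P (S - Z)" .
  have "cnt G P S \<le> card A1 + (if P L then 1 else 0)"
  proof -
    have "{C \<in> comps G S. P C} \<subseteq> A1 \<union> (if P L then {L} else {})" unfolding A1_def by auto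
    then have "cnt G P S \<le> card (A1 \<union> (if P L then {L} else {}))"
      unfolding cnt_def using fA1 by (intro card_mono) auto
    also have "\<dots> \<le> card A1 + card (if P L then {L} else {})" by (rule card_Un_le)
    finally show ?thesis by (auto split: if_splits)
  qed
  then show ?thesis using 1 unfolding A2_def cnt_def by linarith
qed

lemma comps_card_sum: "finite S \<Longrightarrow> card S = (\<Sum>C\<in>comps G S. card C)"
proof -
  assume fin: "finite S"
  have "card (\<Union>(comps G S)) = sum card (comps G S)"
  proof (rule card_Union_disjoint)
    show "pairwise disjnt (comps G S)" unfolding pairwise_def disjnt_def
    proof (intro ballI impI)
      fix A B assume "A \<in> comps G S" "B \<in> comps G S" "A \<noteq> B"
      then show "A \<inter> B = {}" using comps_disj[of A G S B] by blast
    qed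
    show "\<And>A. A \<in> comps G S \<Longrightarrow> finite A" using fin comps_sub[of _ G S] finite_subset by metis
  qed
  then show ?thesis by (simp add: comps_Union)
qed

lemma parity_sum: "finite A \<Longrightarrow> even (sum card A) \<longleftrightarrow> even (card {C\<in>A. odd (card C)})"
proof (induction rule: finite_induct)
  case empty then show ?case by simp
next
  case (insert x F)
  have fF: "finite {C\<in>F. odd (card C)}" using insert by auto
  show ?case
  proof (cases "odd (card x)")
    case True
    then have "{C \<in> insert x F. odd (card C)} = insert x {C\<in>F. odd (card C)}" by auto
    then show ?thesis using insert True fF by auto
  next
    case False
    then have "{C \<in> insert x F. odd (card C)} = {C\<in>F. odd (card C)}" by auto
    then show ?thesis using insert False by auto
  qed
qed

lemma cnt_odd_parity: "finite S \<Longrightarrow> even (card S) \<longleftrightarrow> even (cnt G (\<lambda>C. odd (card C)) S)"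
proof -
  assume f: "finite S"
  have "even (card S) \<longleftrightarrow> even (sum card (comps G S))" using comps_card_sum[OF f, of G] by simp
  also have "\<dots> \<longleftrightarrow> even (card {C\<in>comps G S. odd (card C)})" by (rule parity_sum[OF comps_finite[OF f]])
  finally show ?thesis unfolding cnt_def .
qed

definition pmg :: "'a graph \<Rightarrow> 'a set \<Rightarrow> bool" where
  "pmg G S = has_perfect_matching (cg G S)"

lemma pm_union:
  assumes U: "\<Union>P = S" and D: "\<forall>B\<in>P. \<forall>B'\<in>P. B \<noteq> B' \<longrightarrow> B \<inter> B' = {}"
    and M: "\<forall>B\<in>P. pmg G B"
  shows "pmg G S"
proof -
  have "\<forall>B\<in>P. \<exists>m. perfect_matching (cg G B) m" using M unfolding pmg_def has_perfect_matching_def by blast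
  then obtain m where m: "\<forall>B\<in>P. perfect_matching (cg G B) (m B)" by metis
  define MM where "MM = \<Union>(m ` P)"
  have sub: "\<And>B e. B \<in> P \<Longrightarrow> e \<in> m B \<Longrightarrow> e \<in> edges G \<and> e \<subseteq> B"
    using m unfolding perfect_matching_def by auto
  have "perfect_matching (cg G S) MM"
    unfolding perfect_matching_def
  proof
    show "MM \<subseteq> edges (cg G S)" unfolding MM_def using sub U by auto
    show "\<forall>v\<in>verts (cg G S). \<exists>!e. e \<in> MM \<and> v \<in> e"
    proof
      fix v assume "v \<in> verts (cg G S)"
      then have "v \<in> S" by simp
      then obtain B where B: "B \<in> P" "v \<in> B" using U by blast
      then have "\<exists>!e. e \<in> m B \<and> v \<in> e" using m unfolding perfect_matching_def by auto
      then obtain e where e: "e \<in> m B" "v \<in> e" "\<And>e'. e' \<in> m B \<Longrightarrow> v \<in> e' \<Longrightarrow> e' = e" by blast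
      show "\<exists>!e. e \<in> MM \<and> v \<in> e"
      proof (rule ex1I[of _ e])
        show "e \<in> MM \<and> v \<in> e" using e B unfolding MM_def by blast
        fix e' assume e': "e' \<in> MM \<and> v \<in> e'"
        then obtain B' where B': "B' \<in> P" "e' \<in> m B'" unfolding MM_def by blast
        then have "e' \<subseteq> B'" using sub by blast
        then have "v \<in> B'" using e' by blast
        then have "B' = B" using D B B' by blast
        then show "e' = e" using e(3) B' e' by blast
      qed
    qed
  qed
  then show ?thesis unfolding pmg_def has_perfect_matching_def by blast
qed

lemma pm_edge: "{a, b} \<in> edges G \<Longrightarrow> pmg G {a, b}"
proof -
  assume a: "{a, b} \<in> edges G"
  have "perfect_matching (cg G {a, b}) {{a, b}}"
    unfolding perfect_matching_def using a by auto
  then show ?thesis unfolding pmg_def has_perfect_matching_def by blast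
qed

lemma hyp_cg: "hypomatchable (cg G C) \<longleftrightarrow> (\<forall>u\<in>C. pmg G (C - {u}))"
proof -
  have "del_verts (cg G C) {u} = cg G (C - {u})" for u
    unfolding del_verts_def by (simp add: induced_cg)
  then show ?thesis unfolding hypomatchable_def pmg_def by simp
qed

lemma ex_max:
  fixes f :: "'x \<Rightarrow> 'y::linorder"
  assumes "finite A" "A \<noteq> {}"
  shows "\<exists>x\<in>A. \<forall>y\<in>A. f y \<le> f x"
proof -
  have "Max (f ` A) \<in> f ` A" using assms by simp
  then obtain x where x: "x \<in> A" "f x = Max (f ` A)" by auto
  have "\<forall>y\<in>A. f y \<le> f x" using x assms by simp
  then show ?thesis using x by blast
qed

abbreviation odC :: "'a set \<Rightarrow> bool" where "odC C \<equiv> odd (card C)"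

lemma parity_gap:
  assumes "finite A" "even (card A)" "Z \<subseteq> A" "cnt G odC (A - Z) > card Z"
  shows "cnt G odC (A - Z) \<ge> card Z + 2"
proof -
  have fz: "finite (A - Z)" using assms(1) by simp
  have "card (A - Z) = card A - card Z" using assms(1,3) by (simp add: card_Diff_subset finite_subset)
  moreover have "card Z \<le> card A" using assms(1,3) by (simp add: card_mono)
  ultimately have "even (card (A - Z)) \<longleftrightarrow> even (card Z)" using assms(2) by auto
  then have "even (cnt G odC (A - Z)) \<longleftrightarrow> even (card Z)" using cnt_odd_parity[OF fz, of G] by simp
  then show ?thesis using assms(4) by presburger
qed

lemma tutte:
  "finite S \<Longrightarrow> (\<forall>Z\<subseteq>S. cnt G odC (S - Z) \<le> card Z) \<Longrightarrow> pmg G S"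
proof (induction "card S" arbitrary: S rule: less_induct)
  case less
  note fin = less.prems(1) and H = less.prems(2)
  define SS where "SS = {Y. Y \<subseteq> S \<and> cnt G odC (S - Y) = card Y}"
  have "cnt G odC (S - {}) \<le> card {}" using H[rule_format, of "{}"] by simp
  then have e: "{} \<in> SS" unfolding SS_def by simp
  moreover have "finite SS"
  proof -
    have "SS \<subseteq> Pow S" unfolding SS_def by blast
    then show ?thesis using fin finite_subset by blast
  qed
  then have "\<exists>Y\<in>SS. \<forall>Y'\<in>SS. card Y' \<le> card Y" using e ex_max[of SS card] by blast
  then obtain Y where Y: "Y \<in> SS" and Ymax: "\<And>Y'. Y' \<in> SS \<Longrightarrow> card Y' \<le> card Y"
    by blast
  have YS: "Y \<subseteq> S" and Ycnt: "cnt G odC (S - Y) = card Y" using Y unfolding SS_def by auto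
  have fY: "finite Y" using YS fin finite_subset by blast
  define T where "T = S - Y"
  have fT: "finite T" unfolding T_def using fin by simp
  have grow: "False" if W: "Y \<subseteq> W" "W \<subseteq> S" "card Y < card W" "cnt G odC (S - W) \<ge> card W" for W
  proof -
    have "cnt G odC (S - W) \<le> card W" using H[rule_format, OF W(2)] .
    then have "W \<in> SS" using W unfolding SS_def by simp
    then show False using Ymax[of W] W(3) by simp
  qed
  have allodd: "odd (card K)" if K: "K \<in> comps G T" for K
  proof (rule ccontr)
    assume ev: "\<not> odd (card K)"
    have KT: "K \<subseteq> T" using comps_sub[of K G T] K by blast
    obtain v where v: "v \<in> K" using comps_ne[of K G T] K by blast
    have fK: "finite K" using KT fT finite_subset by blast
    have "card (K - {v}) = card K - 1" using v by (rule card_Diff_singleton)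
    moreover have "card K > 0" using v fK card_gt_0_iff by blast
    ultimately have "odd (card (K - {v}))" using ev by presburger
    then have "odd (cnt G odC (K - {v}))" using cnt_odd_parity[of "K - {v}" G] fK by simp
    then have c1: "cnt G odC (K - {v}) \<ge> 1" by presburger
    have "cnt G odC T + cnt G odC (K - {v}) \<le> cnt G odC (T - {v}) + (if odC K then 1 else 0)"
      using cnt_split[OF fT K, of "{v}"] v by blast
    then have c2: "cnt G odC (T - {v}) \<ge> card Y + 1" using c1 ev Ycnt unfolding T_def by simp
    have vY: "v \<notin> Y" "v \<in> S" using v KT unfolding T_def by auto
    have "T - {v} = S - insert v Y" unfolding T_def by auto
    moreover have "card (insert v Y) = card Y + 1" using vY fY by simp
    ultimately show False using grow[of "insert v Y"] c2 vY YS by auto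
  qed
  have crit: "pmg G (K - {v})" if K: "K \<in> comps G T" and v: "v \<in> K" for K v
  proof -
    have KT: "K \<subseteq> T" using comps_sub[of K G T] K by blast
    have fK: "finite K" using KT fT finite_subset by blast
    have fKv: "finite (K - {v})" using fK by simp
    have lt: "card (K - {v}) < card S"
    proof -
      have "K - {v} \<subset> S" using KT v unfolding T_def by blast
      then show ?thesis using psubset_card_mono[OF fin] by blast
    qed
    have evK: "even (card (K - {v}))" using allodd[OF K] v fK
      by (simp add: card_Diff_singleton)
    show ?thesis
    proof (rule less.hyps[OF lt fKv], intro allI impI)
      fix Z assume Z: "Z \<subseteq> K - {v}"
      show "cnt G odC (K - {v} - Z) \<le> card Z"
      proof (rule ccontr)
        assume "\<not> ?thesis"
        then have "cnt G odC (K - {v} - Z) > card Z" by simp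
        then have c1: "cnt G odC (K - {v} - Z) \<ge> card Z + 2" by (rule parity_gap[OF fKv evK Z])
        have Z': "insert v Z \<subseteq> K" using Z v by blast
        have "cnt G odC T + cnt G odC (K - insert v Z) \<le> cnt G odC (T - insert v Z) + (if odC K then 1 else 0)"
          using cnt_split[OF fT K Z'] by blast
        moreover have "K - insert v Z = K - {v} - Z" by blast
        ultimately have c2: "cnt G odC (T - insert v Z) \<ge> card Y + card Z + 1"
          using c1 Ycnt allodd[OF K] unfolding T_def by simp
        define W where "W = Y \<union> insert v Z"
        have "insert v Z \<subseteq> T" using Z' KT by (rule subset_trans)
        then have dis: "Y \<inter> insert v Z = {}" unfolding T_def by blast
        have fZ: "finite (insert v Z)" using finite_subset[OF Z' fK] .
        have cW: "card W = card Y + card Z + 1"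
        proof -
          have "card W = card Y + card (insert v Z)" unfolding W_def using card_Un_disjoint[OF fY fZ dis] .
          moreover have "card (insert v Z) = card Z + 1"
          proof -
            have "v \<notin> Z" using Z by blast
            then show ?thesis using fZ by simp
          qed
          ultimately show ?thesis by linarith
        qed
        have eqW: "T - insert v Z = S - W" unfolding T_def W_def by auto
        have WS: "W \<subseteq> S" unfolding W_def using YS Z' KT unfolding T_def by blast
        have YW: "Y \<subseteq> W" unfolding W_def by blast
        have lt2: "card Y < card W" using cW by simp
        have "cnt G odC (S - W) \<ge> card W" using c2 cW eqW by simp
        then show False by (rule grow[OF YW WS lt2])
      qed
    qed
  qed
  have fC: "finite (comps G T)" using comps_finite[OF fT] .
  have ncomps: "card (comps G T) = card Y"
  proof -
    have "{C \<in> comps G T. odC C} = comps G T" using allodd by blast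
    then show ?thesis using Ycnt unfolding cnt_def T_def by simp
  qed
  define A where "A = (\<lambda>y. {K \<in> comps G T. \<exists>w\<in>K. {y, w} \<in> edges G})"
  have hall: "\<forall>J\<subseteq>Y. card J \<le> card (\<Union>(A ` J))"
  proof (intro allI impI)
    fix J assume J: "J \<subseteq> Y"
    define N where "N = \<Union>(A ` J)"
    have NC: "N \<subseteq> comps G T" unfolding N_def A_def by blast
    define R where "R = comps G T - N"
    have Rsub: "R \<subseteq> {C \<in> comps G (S - (Y - J)). odC C}"
    proof
      fix K assume KR: "K \<in> R"
      then have K: "K \<in> comps G T" "K \<notin> N" unfolding R_def by auto
      have noedge: "\<forall>x\<in>K. \<forall>y\<in>(S - (Y - J)) - T. {x, y} \<notin> edges G"
      proof (intro ballI)
        fix x y assume x: "x \<in> K" and y: "y \<in> (S - (Y - J)) - T"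
        then have yJ: "y \<in> J" unfolding T_def by blast
        show "{x, y} \<notin> edges G"
        proof
          assume e: "{x, y} \<in> edges G"
          then have "{y, x} \<in> edges G" by (simp add: insert_commute)
          then have "K \<in> A y" unfolding A_def using K(1) x by blast
          then show False using K(2) yJ unfolding N_def by blast
        qed
      qed
      have "T \<subseteq> S - (Y - J)" unfolding T_def by blast
      then have "K \<in> comps G (S - (Y - J))" using comps_remain_up[OF K(1) _ noedge] by blast
      then show "K \<in> {C \<in> comps G (S - (Y - J)). odC C}" using allodd[OF K(1)] by blast
    qed
    have fN: "finite N" using NC fC finite_subset by blast
    have "card R = card Y - card N" unfolding R_def using ncomps NC fN by (simp add: card_Diff_subset)
    moreover have "card R \<le> cnt G odC (S - (Y - J))" unfolding cnt_def
      using Rsub comps_finite[of "S - (Y - J)" G] fin by (simp add: card_mono)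
    moreover have "cnt G odC (S - (Y - J)) \<le> card (Y - J)" using H[rule_format, of "Y - J"] YS by blast
    moreover have "card (Y - J) = card Y - card J" using J fY by (simp add: card_Diff_subset finite_subset)
    moreover have "card J \<le> card Y" using J fY by (simp add: card_mono)
    ultimately show "card J \<le> card (\<Union>(A ` J))" unfolding N_def by linarith
  qed
  have finA: "\<forall>y\<in>Y. finite (A y)" unfolding A_def using fC by auto
  obtain f where f: "inj_on f Y" "\<forall>y\<in>Y. f y \<in> A y" using hall_aux[OF fY finA hall] by blast
  have fim: "f ` Y = comps G T"
  proof (rule card_subset_eq[OF fC])
    show "f ` Y \<subseteq> comps G T" using f(2) unfolding A_def by blast
    show "card (f ` Y) = card (comps G T)" using card_image[OF f(1)] ncomps by simp
  qed
  have "\<forall>y\<in>Y. \<exists>w. w \<in> f y \<and> {y, w} \<in> edges G" using f(2) unfolding A_def by blast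
  then obtain w where w: "\<forall>y\<in>Y. w y \<in> f y \<and> {y, w y} \<in> edges G" by metis
  have fyC: "f y \<in> comps G T" if "y \<in> Y" for y using fim that by blast
  have fyT: "f y \<subseteq> T" if "y \<in> Y" for y using comps_sub[of "f y" G T] fyC[OF that] by blast
  define P where "P = (\<lambda>y. {y, w y}) ` Y \<union> (\<lambda>y. f y - {w y}) ` Y"
  have feq: "y = y'" if "y \<in> Y" "y' \<in> Y" "x \<in> f y" "x \<in> f y'" for y y' x
  proof -
    have "f y = f y'" using comps_disj[of "f y" G T "f y'" x] fyC that by blast
    then show ?thesis using inj_onD[OF f(1) _ that(1,2)] by blast
  qed
  have U: "\<Union>P = S"
  proof
    show "\<Union>P \<subseteq> S" unfolding P_def using w fyT YS unfolding T_def by blast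
    show "S \<subseteq> \<Union>P"
    proof
      fix x assume x: "x \<in> S"
      show "x \<in> \<Union>P"
      proof (cases "x \<in> Y")
        case True then show ?thesis unfolding P_def by blast
      next
        case False
        then have "x \<in> T" using x unfolding T_def by blast
        then obtain K where K: "K \<in> comps G T" "x \<in> K" using comps_cover[of x T G] by blast
        then have "K \<in> f ` Y" using fim by simp
        then obtain y where y: "y \<in> Y" "f y = K" by blast
        show ?thesis
        proof (cases "x = w y")
          case True then show ?thesis unfolding P_def using y by blast
        next
          case False then show ?thesis unfolding P_def using y K by blast
        qed
      qed
    qed
  qed
  have D: "\<forall>B\<in>P. \<forall>B'\<in>P. B \<noteq> B' \<longrightarrow> B \<inter> B' = {}"
  proof (intro ballI impI)
    fix B B' assume B: "B \<in> P" "B' \<in> P" "B \<noteq> B'"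
    have YT: "Y \<inter> T = {}" unfolding T_def by blast
    have wT: "\<And>y. y \<in> Y \<Longrightarrow> w y \<in> T" using w fyT by blast
    have wf: "\<And>y. y \<in> Y \<Longrightarrow> w y \<in> f y" using w by blast
    consider (a) y y' where "y \<in> Y" "y' \<in> Y" "B = {y, w y}" "B' = {y', w y'}"
      | (b) y y' where "y \<in> Y" "y' \<in> Y" "B = {y, w y}" "B' = f y' - {w y'}"
      | (c) y y' where "y \<in> Y" "y' \<in> Y" "B = f y - {w y}" "B' = {y', w y'}"
      | (d) y y' where "y \<in> Y" "y' \<in> Y" "B = f y - {w y}" "B' = f y' - {w y'}"
      using B(1,2) unfolding P_def by blast
    then show "B \<inter> B' = {}"
    proof cases
      case a
      then have "y \<noteq> y'" using B(3) by blast
      moreover have "w y \<noteq> w y'"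
      proof
        assume "w y = w y'"
        then have "w y \<in> f y'" using wf a(2) by simp
        then show False using feq[of y y' "w y"] a(1,2) wf calculation by blast
      qed
      ultimately show ?thesis using a wT YT by blast
    next
      case b
      have "y \<notin> f y'" using b fyT YT by blast
      moreover have "w y \<notin> f y' - {w y'}" using feq[of y y' "w y"] b wf by blast
      ultimately show ?thesis using b by blast
    next
      case c
      have "y' \<notin> f y" using c fyT YT by blast
      moreover have "w y' \<notin> f y - {w y}" using feq[of y' y "w y'"] c wf by blast
      ultimately show ?thesis using c by blast
    next
      case d
      then have "y \<noteq> y'" using B(3) by blast
      then show ?thesis using feq[of y y'] d by blast
    qed
  qed
  have M: "\<forall>B\<in>P. pmg G B"
  proof
    fix B assume "B \<in> P"
    then consider (a) y where "y \<in> Y" "B = {y, w y}" | (b) y where "y \<in> Y" "B = f y - {w y}"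
      unfolding P_def by blast
    then show "pmg G B"
    proof cases
      case a then show ?thesis using pm_edge[of "y" "w y" G] w by blast
    next
      case b then show ?thesis using crit[OF fyC[OF b(1)]] w by blast
    qed
  qed
  show ?case by (rule pm_union[OF U D M])
qed

abbreviation hyC :: "'a graph \<Rightarrow> 'a set \<Rightarrow> bool" where "hyC G C \<equiv> hypomatchable (cg G C)"

lemma strong_tutte:
  assumes fin: "finite S" and H: "\<forall>Z\<subseteq>S. cnt G (hyC G) (S - Z) \<le> card Z"
  shows "pmg G S"
proof (rule ccontr)
  assume npm: "\<not> pmg G S"
  have "\<not> (\<forall>Z\<subseteq>S. cnt G odC (S - Z) \<le> card Z)" using tutte[OF fin] npm by blast
  then obtain Z0 where Z0: "Z0 \<subseteq> S" "cnt G odC (S - Z0) > card Z0" by auto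
  define d where "d = (\<lambda>Y. int (cnt G odC (S - Y)) - int (card Y))"
  define DD where "DD = {Y. Y \<subseteq> S}"
  have fDD: "finite DD" unfolding DD_def using fin by simp
  have Z0D: "Z0 \<in> DD" unfolding DD_def using Z0 by simp
  then have "DD \<noteq> {}" by blast
  then have "\<exists>Y\<in>DD. \<forall>Y'\<in>DD. d Y' \<le> d Y" using ex_max[OF fDD, of d] by blast
  then obtain Y0 where Y0: "Y0 \<in> DD" and Y0max: "\<And>Y'. Y' \<in> DD \<Longrightarrow> d Y' \<le> d Y0" by blast
  define DD' where "DD' = {Y \<in> DD. d Y = d Y0}"
  have fDD': "finite DD'" unfolding DD'_def using fDD by simp
  have "Y0 \<in> DD'" unfolding DD'_def using Y0 by simp
  then have "DD' \<noteq> {}" by blast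
  then have "\<exists>Y\<in>DD'. \<forall>Y'\<in>DD'. card Y' \<le> card Y" using ex_max[OF fDD', of card] by blast
  then obtain Y where Y: "Y \<in> DD'" and Ymax: "\<And>Y'. Y' \<in> DD' \<Longrightarrow> card Y' \<le> card Y" by blast
  have YS: "Y \<subseteq> S" and dY: "d Y = d Y0" using Y unfolding DD'_def DD_def by auto
  have fY: "finite Y" using finite_subset[OF YS fin] .
  have dpos: "d Y > 0"
  proof -
    have "d Z0 > 0" unfolding d_def using Z0 by simp
    moreover have "d Z0 \<le> d Y0" using Y0max[OF Z0D] .
    ultimately show ?thesis using dY by simp
  qed
  define T where "T = S - Y"
  have fT: "finite T" unfolding T_def using fin by simp
  have grow: False if W: "Y \<subseteq> W" "W \<subseteq> S" "card Y < card W" "d W \<ge> d Y" for W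
  proof -
    have WD: "W \<in> DD" unfolding DD_def using W(2) by simp
    have "d W \<le> d Y0" using Y0max[OF WD] .
    then have "W \<in> DD'" unfolding DD'_def using WD W(4) dY by simp
    then show False using Ymax[of W] W(3) by simp
  qed
  have oddhyp: "hyC G K" if K: "K \<in> comps G T" and oK: "odC K" for K
    unfolding hyp_cg
  proof
    fix v assume v: "v \<in> K"
    have KT: "K \<subseteq> T" using comps_sub[of K G T] K by blast
    have fK: "finite K" using finite_subset[OF KT fT] .
    have fKv: "finite (K - {v})" using fK by simp
    have evK: "even (card (K - {v}))"
    proof -
      have "card (K - {v}) = card K - 1" using v by (rule card_Diff_singleton)
      moreover have "card K > 0" using v fK card_gt_0_iff by blast
      ultimately show ?thesis using oK by presburger
    qed
    show "pmg G (K - {v})"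
    proof (rule tutte[OF fKv], intro allI impI)
      fix Z assume Z: "Z \<subseteq> K - {v}"
      show "cnt G odC (K - {v} - Z) \<le> card Z"
      proof (rule ccontr)
        assume "\<not> ?thesis"
        then have "cnt G odC (K - {v} - Z) > card Z" by simp
        then have c1: "cnt G odC (K - {v} - Z) \<ge> card Z + 2" by (rule parity_gap[OF fKv evK Z])
        have Z': "insert v Z \<subseteq> K" using Z v by blast
        have "cnt G odC T + cnt G odC (K - insert v Z) \<le> cnt G odC (T - insert v Z) + (if odC K then 1 else 0)"
          using cnt_split[OF fT K Z'] by blast
        moreover have "K - insert v Z = K - {v} - Z" by blast
        ultimately have c2: "cnt G odC (T - insert v Z) + 1 \<ge> cnt G odC T + card Z + 2"
          using c1 oK by simp
        define W where "W = Y \<union> insert v Z"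
        have "insert v Z \<subseteq> T" using Z' KT by (rule subset_trans)
        then have dis: "Y \<inter> insert v Z = {}" unfolding T_def by blast
        have fZ: "finite (insert v Z)" using finite_subset[OF Z' fK] .
        have cW: "card W = card Y + card Z + 1"
        proof -
          have "card W = card Y + card (insert v Z)" unfolding W_def using card_Un_disjoint[OF fY fZ dis] .
          moreover have "card (insert v Z) = card Z + 1"
          proof -
            have "v \<notin> Z" using Z by blast
            then show ?thesis using fZ by simp
          qed
          ultimately show ?thesis by linarith
        qed
        have eqW: "T - insert v Z = S - W" unfolding T_def W_def by auto
        have WS: "W \<subseteq> S" unfolding W_def using \<open>insert v Z \<subseteq> T\<close> YS unfolding T_def by blast
        have YW: "Y \<subseteq> W" unfolding W_def by blast
        have lt2: "card Y < card W" using cW by simp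
        have "d W \<ge> d Y" unfolding d_def using c2 cW eqW unfolding T_def by simp
        then show False by (rule grow[OF YW WS lt2])
      qed
    qed
  qed
  have "{C \<in> comps G T. odC C} \<subseteq> {C \<in> comps G T. hyC G C}" using oddhyp by blast
  then have "cnt G odC T \<le> cnt G (hyC G) T" unfolding cnt_def
    using comps_finite[OF fT, of G] by (simp add: card_mono)
  moreover have "cnt G (hyC G) T \<le> card Y" unfolding T_def using H[rule_format, OF YS] .
  moreover have "cnt G odC T > card Y" using dpos unfolding d_def T_def by simp
  ultimately show False by simp
qed

lemma component_graphs_cg: "component_graphs (cg G S) = cg G ` comps G S"
proof -
  have "induced (cg G S) K = cg G K" if "K \<in> comps G S" for K
    using induced_cg[OF comps_sub[OF that]] .
  then show ?thesis unfolding component_graphs_def comps_def by (auto simp: image_iff)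
qed

lemma edge_iso:
  assumes ab: "a \<noteq> b" and P2: "\<exists>H\<in>F. isomorphic H P2"
  shows "\<exists>H\<in>F. isomorphic ({a, b}, {{a, b}}) H"
proof -
  obtain H where H: "H \<in> F" "isomorphic H P2" using P2 by blast
  have vP: "verts P2 = {0, 1}" and eP: "edges P2 = {{0, 1}}" unfolding P2_def verts_def edges_def by simp_all
  obtain h where hb: "bij_betw h (verts H) {0, 1}"
    and he: "\<forall>u\<in>verts H. \<forall>v\<in>verts H. {u, v} \<in> edges H \<longleftrightarrow> {h u, h v} \<in> {{0::nat, 1}}"
    using H(2) unfolding isomorphic_def vP eP by blast
  define p where "p = inv_into (verts H) h"
  have pb: "bij_betw p {0, 1} (verts H)" unfolding p_def using bij_betw_inv_into[OF hb] .
  have im: "h ` verts H = {0, 1}" using hb by (simp add: bij_betw_def)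
  have p0: "p 0 \<in> verts H" "h (p 0) = 0"
  proof -
    have z: "(0::nat) \<in> h ` verts H" using im by simp
    show "p 0 \<in> verts H" unfolding p_def by (rule inv_into_into[OF z])
    show "h (p 0) = 0" unfolding p_def by (rule f_inv_into_f[OF z])
  qed
  have p1: "p 1 \<in> verts H" "h (p 1) = 1"
  proof -
    have z: "(1::nat) \<in> h ` verts H" using im by simp
    show "p 1 \<in> verts H" unfolding p_def by (rule inv_into_into[OF z])
    show "h (p 1) = 1" unfolding p_def by (rule f_inv_into_f[OF z])
  qed
  have pne: "p 0 \<noteq> p 1" using p0(2) p1(2) by auto
  have VH: "verts H = {p 0, p 1}" using pb unfolding bij_betw_def by simp
  define f where "f = (\<lambda>x. if x = a then p 0 else p 1)"
  have fa: "f a = p 0" and fb': "f b = p 1" unfolding f_def using ab by simp_all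
  have fb: "bij_betw f {a, b} (verts H)"
  proof (rule bij_betw_imageI)
    show "inj_on f {a, b}" unfolding inj_on_def using fa fb' pne by auto
    show "f ` {a, b} = verts H" using fa fb' VH by simp
  qed
  have "\<forall>u\<in>{a, b}. \<forall>v\<in>{a, b}. {u, v} \<in> {{a, b}} \<longleftrightarrow> {f u, f v} \<in> edges H"
  proof (intro ballI)
    fix u v assume uv: "u \<in> {a, b}" "v \<in> {a, b}"
    have fu: "f u \<in> verts H" "f v \<in> verts H" using uv fa fb' VH by auto
    have 1: "{f u, f v} \<in> edges H \<longleftrightarrow> {h (f u), h (f v)} \<in> {{0::nat, 1}}" using he[rule_format, OF fu(1) fu(2)] .
    have 2: "{u, v} \<in> {{a, b}} \<longleftrightarrow> {h (f u), h (f v)} \<in> {{0::nat, 1}}"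
    proof -
      have hfa: "h (f a) = 0" "h (f b) = 1" using fa fb' p0 p1 by simp_all
      consider "u = a" "v = a" | "u = a" "v = b" | "u = b" "v = a" | "u = b" "v = b" using uv by blast
      then show ?thesis
      proof cases
        case 1 then show ?thesis using hfa ab by (simp add: doubleton_eq_iff)
      next
        case 2 then show ?thesis using hfa ab by (simp add: doubleton_eq_iff)
      next
        case 3 then show ?thesis using hfa ab by (simp add: doubleton_eq_iff insert_commute)
      next
        case 4 then show ?thesis using hfa ab by (simp add: doubleton_eq_iff)
      qed
    qed
    show "{u, v} \<in> {{a, b}} \<longleftrightarrow> {f u, f v} \<in> edges H" by (rule trans[OF 2 1[symmetric]])
  qed
  then have "bij_betw f (verts ({a, b}, {{a, b}})) (verts H) \<and>
      (\<forall>u\<in>verts ({a, b}, {{a, b}}). \<forall>v\<in>verts ({a, b}, {{a, b}}).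
         {u, v} \<in> edges ({a, b}, {{a, b}}) \<longleftrightarrow> {f u, f v} \<in> edges H)"
    using fb unfolding verts_def edges_def by simp
  then have "isomorphic ({a, b}, {{a, b}}) H" unfolding isomorphic_def by (rule exI[of _ f])
  then show ?thesis using H by blast
qed

lemma edge_factor:
  assumes sG: "simple_graph G" and e: "{a, b} \<in> edges G" and P2: "\<exists>H\<in>F. isomorphic H P2"
  shows "has_factor F (cg G {a, b})"
proof -
  have ab: "a \<noteq> b" using sG e unfolding simple_graph_def by (metis doubleton_eq_iff)
  define G' :: "'a graph" where "G' = ({a, b}, {{a, b}})"
  have comps': "components G' = {{a, b}}"
  proof -
    have r: "reach G' u v" if "u \<in> {a, b}" "v \<in> {a, b}" for u v
    proof (cases "u = v")
      case True then show ?thesis unfolding reach_def by simp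
    next
      case False
      then have "{u, v} = {a, b}" using that by auto
      then have "{u, v} \<in> edges G'" unfolding G'_def edges_def by simp
      then show ?thesis unfolding reach_def by (rule r_into_rtranclp)
    qed
    have "{v \<in> {a, b}. reach G' u v} = {a, b}" if "u \<in> {a, b}" for u using r[OF that] by blast
    then show ?thesis unfolding components_def G'_def verts_def by auto
  qed
  have cg': "component_graphs G' = {G'}"
    unfolding component_graphs_def comps' unfolding G'_def induced_def verts_def edges_def by auto
  have "is_factor F (cg G {a, b}) {{a, b}}"
    unfolding is_factor_def using e edge_iso[OF ab P2] cg' unfolding G'_def by auto
  then show ?thesis unfolding has_factor_def by blast
qed

lemma factor_union:
  assumes sG: "simple_graph G" and U: "\<Union>P = S"
    and D: "\<forall>B\<in>P. \<forall>B'\<in>P. B \<noteq> B' \<longrightarrow> B \<inter> B' = {}"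
    and Fa: "\<forall>B\<in>P. has_factor F (cg G B)"
  shows "has_factor F (cg G S)"
proof -
  have "\<forall>B\<in>P. \<exists>E'. is_factor F (cg G B) E'" using Fa unfolding has_factor_def by blast
  then obtain Ef where Ef: "\<forall>B\<in>P. is_factor F (cg G B) (Ef B)" by metis
  have Efs: "\<And>B e. B \<in> P \<Longrightarrow> e \<in> Ef B \<Longrightarrow> e \<in> edges G \<and> e \<subseteq> B"
    using Ef unfolding is_factor_def by auto
  have ene: "\<And>e. e \<in> edges G \<Longrightarrow> e \<noteq> {}" using sG unfolding simple_graph_def by blast
  define E' where "E' = \<Union>(Ef ` P)"
  define G' :: "'a graph" where "G' = (S, E')"
  have eG': "edges G' = E'" "verts G' = S" unfolding G'_def edges_def verts_def by auto
  have E'S: "\<And>e. e \<in> E' \<Longrightarrow> e \<subseteq> S" unfolding E'_def using Efs U by blast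
  have cgS: "cg G' S = G'" unfolding cg_def G'_def using E'S unfolding edges_def by auto
  have cgB: "cg G' B = (B, Ef B)" if B: "B \<in> P" for B
  proof -
    have "{e \<in> E'. e \<subseteq> B} = Ef B"
    proof
      show "Ef B \<subseteq> {e \<in> E'. e \<subseteq> B}" unfolding E'_def using Efs B by blast
      show "{e \<in> E'. e \<subseteq> B} \<subseteq> Ef B"
      proof
        fix e assume "e \<in> {e \<in> E'. e \<subseteq> B}"
        then obtain B' where B': "B' \<in> P" "e \<in> Ef B'" "e \<subseteq> B" unfolding E'_def by blast
        have "e \<subseteq> B'" "e \<noteq> {}" using Efs[OF B'(1,2)] ene by auto
        then have "B' = B" using D B B'(1,3) by blast
        then show "e \<in> Ef B" using B' by simp
      qed
    qed
    then show ?thesis unfolding cg_def eG' by simp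
  qed
  have clB: "closed G' S B" if B: "B \<in> P" for B
    unfolding closed_def
  proof (intro ballI impI)
    fix x y assume xy: "x \<in> B" "y \<in> S" "{x, y} \<in> edges G'"
    then obtain B' where B': "B' \<in> P" "{x, y} \<in> Ef B'" unfolding eG' E'_def by blast
    then have "{x, y} \<subseteq> B'" using Efs by blast
    then have "B' = B" using D B B'(1) xy(1) by blast
    then show "y \<in> B" using \<open>{x, y} \<subseteq> B'\<close> by blast
  qed
  have "is_factor F (cg G S) E'"
    unfolding is_factor_def
  proof
    show "E' \<subseteq> edges (cg G S)" unfolding E'_def using Efs U by auto
    show "\<forall>C\<in>component_graphs (verts (cg G S), E'). \<exists>H\<in>F. isomorphic C H"
    proof
      fix C assume "C \<in> component_graphs (verts (cg G S), E')"
      then have "C \<in> component_graphs (cg G' S)" using cgS unfolding G'_def by simp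
      then obtain K where K: "K \<in> comps G' S" "C = cg G' K" unfolding component_graphs_cg by blast
      obtain u where u: "u \<in> K" using comps_ne[OF K(1)] by blast
      then have "u \<in> S" using comps_sub[OF K(1)] by blast
      then obtain B where B: "B \<in> P" "u \<in> B" using U by blast
      have BS: "B \<subseteq> S" using U B(1) by blast
      have KB: "K \<subseteq> B"
      proof
        fix v assume "v \<in> K"
        then have "reach (cg G' S) u v" using comp_class[OF K(1) u] by blast
        then show "v \<in> B" using reach_closed[of G' S u v B] B clB by blast
      qed
      have "K \<in> comps G' B" using comps_remain_down[OF K(1) KB BS] .
      then have "C \<in> component_graphs (cg G' B)" using K(2) unfolding component_graphs_cg by blast
      then have "C \<in> component_graphs (verts (cg G B), Ef B)" using cgB[OF B(1)] by simp
      then show "\<exists>H\<in>F. isomorphic C H" using Ef B(1) unfolding is_factor_def by blast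
    qed
  qed
  then show ?thesis unfolding has_factor_def by blast
qed

lemma pm_factor:
  assumes sG: "simple_graph G" and P2: "\<exists>H\<in>F. isomorphic H P2" and pm: "pmg G S"
  shows "has_factor F (cg G S)"
proof -
  obtain M where M: "perfect_matching (cg G S) M" using pm unfolding pmg_def has_perfect_matching_def by blast
  have Msub: "\<And>e. e \<in> M \<Longrightarrow> e \<in> edges G \<and> e \<subseteq> S" using M unfolding perfect_matching_def by auto
  have uniq: "\<And>v. v \<in> S \<Longrightarrow> \<exists>!e. e \<in> M \<and> v \<in> e" using M unfolding perfect_matching_def by simp
  show ?thesis
  proof (rule factor_union[OF sG])
    show "\<Union>M = S"
    proof
      show "\<Union>M \<subseteq> S" using Msub by blast
      show "S \<subseteq> \<Union>M" using uniq by blast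
    qed
    show "\<forall>B\<in>M. \<forall>B'\<in>M. B \<noteq> B' \<longrightarrow> B \<inter> B' = {}"
    proof (intro ballI impI)
      fix B B' assume B: "B \<in> M" "B' \<in> M" "B \<noteq> B'"
      show "B \<inter> B' = {}"
      proof (rule ccontr)
        assume "B \<inter> B' \<noteq> {}"
        then obtain v where v: "v \<in> B" "v \<in> B'" by blast
        then have "v \<in> S" using Msub B by blast
        then show False using uniq[of v] v B by blast
      qed
    qed
    show "\<forall>B\<in>M. has_factor F (cg G B)"
    proof
      fix B assume B: "B \<in> M"
      then have "B \<in> edges G" using Msub by blast
      then obtain a b where "B = {a, b}" using sG unfolding simple_graph_def by blast
      then show "has_factor F (cg G B)" using edge_factor[OF sG _ P2] \<open>B \<in> edges G\<close> by blast
    qed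
  qed
qed

lemma bF_cnt: "b_F F (del_verts G X) = cnt G (\<lambda>C. hyC G C \<and> \<not> has_factor F (cg G C)) (verts G - X)"
proof -
  define S where "S = verts G - X"
  have "component_graphs (del_verts G X) = cg G ` comps G S"
    unfolding del_verts_cg S_def by (rule component_graphs_cg)
  moreover have "{C \<in> cg G ` A. hypomatchable C \<and> \<not> has_factor F C} = cg G ` {C \<in> A. hyC G C \<and> \<not> has_factor F (cg G C)}" for A
    by blast
  moreover have "inj_on (cg G) B" for B by (meson cg_inj inj_onI)
  ultimately show ?thesis unfolding b_F_def cnt_def S_def by (simp add: card_image)
qed

lemma sub_card_le: "finite B \<Longrightarrow> A \<subseteq> B \<Longrightarrow> card A \<le> card B" by (rule card_mono)

theorem proposition2p1:
  fixes F :: "'b graph set" and G :: "'a graph"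
  assumes F_graphs: "\<forall>H\<in>F. simple_graph H \<and> connected_graph H"
    and P2_in_F: "\<exists>H\<in>F. isomorphic H P2"
    and G_graph: "finite_simple_graph G"
    and cond: "\<forall>X. X \<subseteq> verts G \<longrightarrow> b_F F (del_verts G X) \<le> card X"
  shows "has_factor F G"
proof -
  have sG: "simple_graph G" and fV: "finite (verts G)" using G_graph unfolding finite_simple_graph_def by auto
  define V where "V = verts G"
  have fV': "finite V" using fV unfolding V_def .
  define bad where "bad = (\<lambda>C. hyC G C \<and> \<not> has_factor F (cg G C))"
  have condc: "cnt G bad (V - Y) \<le> card Y" if "Y \<subseteq> V" for Y
    using cond[rule_format, of Y] that bF_cnt[of F G Y] unfolding V_def bad_def by simp
  define s where "s = (\<lambda>Y. int (cnt G (hyC G) (V - Y)) - int (card Y))"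
  have fPV: "finite (Pow V)" using fV' by simp
  have "\<exists>X\<in>Pow V. \<forall>Y\<in>Pow V. s Y \<le> s X" using ex_max[OF fPV, of s] by blast
  then obtain X where XV: "X \<subseteq> V" and Xmax: "\<And>Y. Y \<subseteq> V \<Longrightarrow> s Y \<le> s X" by blast
  define T where "T = V - X"
  have fT: "finite T" unfolding T_def using fV' by simp
  have fX: "finite X" using finite_subset[OF XV fV'] .
  define k where "k = cnt G (hyC G) T"
  have "s {} \<le> s X" using Xmax[of "{}"] by simp
  then have kX: "card X \<le> k" unfolding s_def k_def T_def by simp
  define sN where "sN = k - card X"
  have sX: "s X = int sN" unfolding s_def sN_def k_def T_def using kX unfolding T_def k_def by simp
  define CC where "CC = comps G T"
  have fCC: "finite CC" unfolding CC_def using comps_finite[OF fT] .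
  define Hc where "Hc = {C \<in> CC. hyC G C}"
  have cHc: "card Hc = k" unfolding Hc_def k_def cnt_def CC_def ..
  have fHc: "finite Hc" unfolding Hc_def using fCC by simp
  have CT: "C \<subseteq> T" if "C \<in> CC" for C using comps_sub[of C G T] that unfolding CC_def by blast
  have XT: "X \<inter> T = {}" unfolding T_def by blast
  have nonhyp: "pmg G L" if L: "L \<in> CC" "\<not> hyC G L" for L
  proof -
    have fL: "finite L" using finite_subset[OF CT[OF L(1)] fT] .
    show ?thesis
    proof (rule strong_tutte[OF fL], intro allI impI)
      fix Z assume Z: "Z \<subseteq> L"
      have L': "L \<in> comps G T" using L(1) unfolding CC_def .
      have "cnt G (hyC G) T + cnt G (hyC G) (L - Z) \<le> cnt G (hyC G) (T - Z) + (if hyC G L then 1 else 0)"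
        using cnt_split[OF fT L' Z] .
      then have c1: "k + cnt G (hyC G) (L - Z) \<le> cnt G (hyC G) (T - Z)" using L(2) unfolding k_def by simp
      have ZT: "Z \<subseteq> T" using Z CT[OF L(1)] by blast
      have XZV: "X \<union> Z \<subseteq> V" using XV ZT unfolding T_def by blast
      have eq: "T - Z = V - (X \<union> Z)" unfolding T_def by blast
      have fZ: "finite Z" using finite_subset[OF ZT fT] .
      have cXZ: "card (X \<union> Z) = card X + card Z" using card_Un_disjoint[OF fX fZ] ZT XT by blast
      have "s (X \<union> Z) \<le> s X" using Xmax[OF XZV] .
      then have "int (cnt G (hyC G) (T - Z)) - int (card X + card Z) \<le> int k - int (card X)"
        unfolding s_def eq[symmetric] cXZ[symmetric] T_def k_def by simp
      then show "cnt G (hyC G) (L - Z) \<le> card Z" using c1 by linarith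
    qed
  qed
  define Nb where "Nb = (\<lambda>C. {x \<in> X. \<exists>w\<in>C. {x, w} \<in> edges G})"
  define A :: "'a set \<Rightarrow> ('a + nat) set" where
    "A = (\<lambda>C. Inl ` Nb C \<union> (if has_factor F (cg G C) then Inr ` {..<sN} else {}))"
  have NbX: "Nb C \<subseteq> X" for C unfolding Nb_def by blast
  have finA: "finite (A C)" for C
  proof -
    have "finite (Nb C)" using finite_subset[OF NbX fX] .
    then show ?thesis unfolding A_def by simp
  qed
  have hall: "\<forall>Tt\<subseteq>Hc. card Tt \<le> card (\<Union>(A ` Tt))"
  proof (intro allI impI)
    fix Tt assume Tt: "Tt \<subseteq> Hc"
    define N where "N = \<Union>(Nb ` Tt)"
    have NX: "N \<subseteq> X" unfolding N_def using NbX by blast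
    have NV: "N \<subseteq> V" using NX XV by blast
    have fTt: "finite Tt" using finite_subset[OF Tt fHc] .
    have fU: "finite (\<Union>(A ` Tt))" using fTt finA by blast
    have fN: "finite N" using finite_subset[OF NX fX] .
    have rem: "C \<in> comps G (V - N)" if C: "C \<in> Tt" for C
    proof -
      have C': "C \<in> comps G T" using C Tt unfolding Hc_def CC_def by blast
      have TN: "T \<subseteq> V - N" unfolding T_def using NX by blast
      have "\<forall>x\<in>C. \<forall>y\<in>(V - N) - T. {x, y} \<notin> edges G"
      proof (intro ballI)
        fix x y assume x: "x \<in> C" and y: "y \<in> (V - N) - T"
        then have yX: "y \<in> X" "y \<notin> N" unfolding T_def by blast+
        show "{x, y} \<notin> edges G"
        proof
          assume "{x, y} \<in> edges G"
          then have "{y, x} \<in> edges G" by (simp add: insert_commute)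
          then have "y \<in> Nb C" unfolding Nb_def using yX(1) x by blast
          then show False using yX(2) C unfolding N_def by blast
        qed
      qed
      then show ?thesis using comps_remain_up[OF C' TN] by blast
    qed
    have InlN: "Inl ` N \<subseteq> \<Union>(A ` Tt)" unfolding N_def A_def by blast
    show "card Tt \<le> card (\<Union>(A ` Tt))"
    proof (cases "\<exists>C\<in>Tt. has_factor F (cg G C)")
      case False
      have "Tt \<subseteq> {C \<in> comps G (V - N). bad C}"
        using rem False Tt unfolding bad_def Hc_def by blast
      then have "card Tt \<le> cnt G bad (V - N)" unfolding cnt_def
        using comps_finite[of "V - N" G] fV' by (simp add: card_mono)
      also have "\<dots> \<le> card N" using condc[OF NV] .
      also have "\<dots> = card (Inl ` N :: ('a + nat) set)" by (simp add: card_image)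
      also have "\<dots> \<le> card (\<Union>(A ` Tt))" using card_mono[OF fU InlN] .
      finally show ?thesis .
    next
      case True
      then obtain C0 where C0: "C0 \<in> Tt" "has_factor F (cg G C0)" by blast
      have "Inr ` {..<sN} \<subseteq> A C0" unfolding A_def using C0(2) by simp
      then have sub: "Inl ` N \<union> Inr ` {..<sN} \<subseteq> \<Union>(A ` Tt)" using InlN C0(1) by blast
      have "card (Inl ` N \<union> Inr ` {..<sN} :: ('a + nat) set) = card N + sN"
        by (subst card_Un_disjoint) (auto simp: card_image fN)
      then have c1: "card N + sN \<le> card (\<Union>(A ` Tt))" using card_mono[OF fU sub] by simp
      have "Tt \<subseteq> {C \<in> comps G (V - N). hyC G C}"
        using rem Tt unfolding Hc_def by blast
      then have c2: "card Tt \<le> cnt G (hyC G) (V - N)" unfolding cnt_def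
        using comps_finite[of "V - N" G] fV' by (simp add: card_mono)
      have "s N \<le> s X" using Xmax[OF NV] .
      then have "int (cnt G (hyC G) (V - N)) - int (card N) \<le> int sN" using sX unfolding s_def by simp
      then show ?thesis using c1 c2 by linarith
    qed
  qed
  obtain f where f: "inj_on f Hc" "\<forall>C\<in>Hc. f C \<in> A C"
    using hall_aux[OF fHc _ hall] finA by blast
  define R :: "('a + nat) set" where "R = Inl ` X \<union> Inr ` {..<sN}"
  have fR: "finite R" unfolding R_def using fX by simp
  have cR: "card R = k" unfolding R_def sN_def using kX
    by (subst card_Un_disjoint) (auto simp: card_image fX)
  have fim: "f ` Hc = R"
  proof (rule card_subset_eq[OF fR])
    show "f ` Hc \<subseteq> R"
    proof
      fix y assume "y \<in> f ` Hc"
      then obtain C where C: "C \<in> Hc" "y = f C" by blast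
      then have "y \<in> A C" using f(2) by blast
      then show "y \<in> R" unfolding A_def R_def using NbX[of C] by (auto split: if_splits)
    qed
    show "card (f ` Hc) = card R" using card_image[OF f(1)] cHc cR by simp
  qed
  define Hu where "Hu = {C \<in> Hc. \<exists>j. f C = Inr j}"
  define Hm where "Hm = Hc - Hu"
  have Hugood: "has_factor F (cg G C)" if CHu: "C \<in> Hu" for C
  proof -
    obtain j where j: "f C = Inr j" "C \<in> Hc" using CHu unfolding Hu_def by blast
    then have "Inr j \<in> A C" using f(2) by metis
    then show ?thesis unfolding A_def by (auto split: if_splits)
  qed
  have "\<forall>C\<in>Hm. \<exists>x w. f C = Inl x \<and> x \<in> X \<and> w \<in> C \<and> {x, w} \<in> edges G"
  proof
    fix C assume C: "C \<in> Hm"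
    then have CH: "C \<in> Hc" "\<forall>j. f C \<noteq> Inr j" unfolding Hm_def Hu_def by blast+
    then have "f C \<in> A C" using f(2) by blast
    then have "f C \<in> Inl ` Nb C" unfolding A_def using CH(2) by (auto split: if_splits)
    then obtain x where "f C = Inl x" "x \<in> Nb C" by blast
    then show "\<exists>x w. f C = Inl x \<and> x \<in> X \<and> w \<in> C \<and> {x, w} \<in> edges G" unfolding Nb_def by blast
  qed
  then obtain xx ww where xw: "\<forall>C\<in>Hm. f C = Inl (xx C) \<and> xx C \<in> X \<and> ww C \<in> C \<and> {xx C, ww C} \<in> edges G"
    by metis
  have xxinj: "C = C'" if xe: "xx C = xx C'" "C \<in> Hm" "C' \<in> Hm" for C C'
  proof -
    have "f C = f C'" using xw xe by metis
    moreover have "C \<in> Hc" "C' \<in> Hc" using xe unfolding Hm_def by blast+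
    ultimately show ?thesis using inj_onD[OF f(1)] by blast
  qed
  define blk where "blk = (\<lambda>C. if C \<in> Hm then insert (xx C) C else C)"
  define P where "P = blk ` (CC - Hu) \<union> Hu"
  have HuCC: "Hu \<subseteq> CC" unfolding Hu_def Hc_def by blast
  have HmCC: "Hm \<subseteq> CC" unfolding Hm_def Hc_def by blast
  have blkfac: "has_factor F (cg G (blk C))" if C: "C \<in> CC - Hu" for C
  proof (cases "C \<in> Hm")
    case True
    have x: "xx C \<in> X" "ww C \<in> C" "{xx C, ww C} \<in> edges G" using xw True by blast+
    have xC: "xx C \<notin> C" using x(1) CT[of C] C XT by blast
    have "pmg G (insert (xx C) C)"
    proof (rule pm_union)
      show "\<Union>{{xx C, ww C}, C - {ww C}} = insert (xx C) C" using x(2) by blast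
      show "\<forall>B\<in>{{xx C, ww C}, C - {ww C}}. \<forall>B'\<in>{{xx C, ww C}, C - {ww C}}. B \<noteq> B' \<longrightarrow> B \<inter> B' = {}"
        using xC by blast
      have "hyC G C" using True unfolding Hm_def Hc_def by blast
      then have "pmg G (C - {ww C})" using x(2) unfolding hyp_cg by blast
      then show "\<forall>B\<in>{{xx C, ww C}, C - {ww C}}. pmg G B" using pm_edge[OF x(3)] by blast
    qed
    then show ?thesis unfolding blk_def using True pm_factor[OF sG P2_in_F] by simp
  next
    case False
    then have "\<not> hyC G C" using C unfolding Hm_def Hc_def by blast
    then have "pmg G C" using nonhyp C by blast
    then show ?thesis unfolding blk_def using False pm_factor[OF sG P2_in_F] by simp
  qed
  have memb: "v \<in> C \<or> (C \<in> Hm \<and> v = xx C)" if "v \<in> blk C" for v C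
    using that unfolding blk_def by (auto split: if_splits)
  have Cblk: "C \<subseteq> blk C" for C unfolding blk_def by auto
  have CV: "C \<subseteq> V" if "C \<in> CC" for C using CT[OF that] unfolding T_def by blast
  have xxV: "xx C \<in> X" if "C \<in> Hm" for C using xw that by blast
  have U: "\<Union>P = V"
  proof
    show "\<Union>P \<subseteq> V"
    proof
      fix v assume "v \<in> \<Union>P"
      then obtain B where B: "B \<in> P" "v \<in> B" by blast
      then consider (a) C where "C \<in> CC - Hu" "B = blk C" | (b) "B \<in> Hu" unfolding P_def by blast
      then show "v \<in> V"
      proof cases
        case a
        then have "v \<in> C \<or> (C \<in> Hm \<and> v = xx C)" using memb B(2) by blast
        then show ?thesis using CV[of C] a(1) xxV[of C] XV by blast
      next
        case b then show ?thesis using CV HuCC B(2) by blast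
      qed
    qed
    show "V \<subseteq> \<Union>P"
    proof
      fix v assume vV: "v \<in> V"
      show "v \<in> \<Union>P"
      proof (cases "v \<in> X")
        case True
        then have "Inl v \<in> f ` Hc" unfolding fim R_def by blast
        then obtain C where C: "C \<in> Hc" "f C = Inl v" by (metis imageE)
        then have "C \<notin> Hu" unfolding Hu_def by auto
        then have CHm: "C \<in> Hm" using C(1) unfolding Hm_def by blast
        then have "xx C = v" using xw C(2) by auto
        then have "v \<in> blk C" unfolding blk_def using CHm by simp
        moreover have "C \<in> CC - Hu" using CHm HmCC unfolding Hm_def by blast
        ultimately show ?thesis unfolding P_def by blast
      next
        case False
        then have "v \<in> T" using vV unfolding T_def by blast
        then obtain C where C: "C \<in> CC" "v \<in> C" using comps_cover[of v T G] unfolding CC_def by blast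
        show ?thesis
        proof (cases "C \<in> Hu")
          case True then show ?thesis unfolding P_def using C(2) by blast
        next
          case False
          then have "v \<in> blk C" "C \<in> CC - Hu" using C Cblk by blast+
          then show ?thesis unfolding P_def by blast
        qed
      qed
    qed
  qed
  have disjC: "C = C'" if "C \<in> CC" "C' \<in> CC" "v \<in> C" "v \<in> C'" for C C' v
    using comps_disj[of C G T C' v] that unfolding CC_def by blast
  have notX: "v \<notin> X" if "C \<in> CC" "v \<in> C" for C v using CT[OF that(1)] that(2) XT by blast
  have D: "\<forall>B\<in>P. \<forall>B'\<in>P. B \<noteq> B' \<longrightarrow> B \<inter> B' = {}"
  proof (intro ballI impI)
    fix B B' assume B: "B \<in> P" "B' \<in> P" "B \<noteq> B'"
    show "B \<inter> B' = {}"
    proof (rule ccontr)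
      assume "B \<inter> B' \<noteq> {}"
      then obtain v where v: "v \<in> B" "v \<in> B'" by blast
      consider (a) C C' where "C \<in> CC - Hu" "B = blk C" "C' \<in> CC - Hu" "B' = blk C'"
        | (b) C C' where "C \<in> CC - Hu" "B = blk C" "C' \<in> Hu" "B' = C'"
        | (c) C C' where "C \<in> Hu" "B = C" "C' \<in> CC - Hu" "B' = blk C'"
        | (d) "B \<in> Hu" "B' \<in> Hu"
        using B(1,2) unfolding P_def by blast
      then show False
      proof cases
        case a
        then have ne: "C \<noteq> C'" using B(3) by blast
        have m1: "v \<in> C \<or> (C \<in> Hm \<and> v = xx C)" using memb a(2) v(1) by blast
        have m2: "v \<in> C' \<or> (C' \<in> Hm \<and> v = xx C')" using memb a(4) v(2) by blast
        have CC1: "C \<in> CC" "C' \<in> CC" using a by blast+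
        show False
        proof (cases "v \<in> C")
          case True
          then show False using m2 disjC[OF CC1 True] ne notX[OF CC1(1) True] xxV by blast
        next
          case False
          then have v1: "C \<in> Hm" "v = xx C" using m1 by blast+
          show False
          proof (cases "v \<in> C'")
            case True then show False using notX[OF CC1(2) True] v1 xxV by blast
          next
            case False
            then have "C' \<in> Hm" "v = xx C'" using m2 by blast+
            then show False using xxinj[of C C'] v1 ne by simp
          qed
        qed
      next
        case b
        have CC1: "C \<in> CC" "C' \<in> CC" using b HuCC by blast+
        have ne: "C \<noteq> C'" using b by blast
        have vC': "v \<in> C'" using v(2) b by simp
        have m1: "v \<in> C \<or> (C \<in> Hm \<and> v = xx C)" using memb b(2) v(1) by blast
        then show False using disjC[OF CC1 _ vC'] ne notX[OF CC1(2) vC'] xxV by blast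
      next
        case c
        have CC1: "C \<in> CC" "C' \<in> CC" using c HuCC by blast+
        have ne: "C \<noteq> C'" using c by blast
        have vC: "v \<in> C" using v(1) c by simp
        have m1: "v \<in> C' \<or> (C' \<in> Hm \<and> v = xx C')" using memb c(4) v(2) by blast
        then show False using disjC[OF CC1 vC] ne notX[OF CC1(1) vC] xxV by blast
      next
        case d
        then show False using disjC[of B B' v] HuCC v B(3) by blast
      qed
    qed
  qed
  have Fa: "\<forall>B\<in>P. has_factor F (cg G B)"
    unfolding P_def using blkfac Hugood by blast
  have "has_factor F (cg G V)" using factor_union[OF sG U D Fa] .
  then show ?thesis unfolding V_def using simple_cg_self[OF sG] by simp
qed

end
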